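(* Let $d\ge 3$ and $\delta,\lambda>0$. Let $S$ be the inverse Gaussian subordinator with Laplace exponent $\phi(s)=\delta\left(\sqrt{2s+\lambda^2}-\lambda\right)$ and potential density $u$, and let $B$ be a $d$-dimensional Brownian motion independent of $S$ with transition density $p(t,x,y)=(4\pi t)^{-d/2}\exp\left(-\frac{|x-y|^2}{4t}\right)$. Let $G(x)=\int_0^\infty p(t,0,x)\,u(t)\,dt$ be the Green function of the normal inverse Gaussian process $Y(t)=B(S(t))$. Then \begin{enumerate} \item $G(x)\sim \dfrac{1}{2^{3/2}\pi^{d/2}\delta}\,\dfrac{\Gamma\left(\frac{d-1}{2}\right)}{\Gamma\left(\frac12\right)}|x|^{1-d}$ as $|x|\to 0^+$; \item $G(x)\sim \dfrac{\lambda}{4\pi^{d/2}\delta}\,\Gamma\left(\frac{d-2}{2}\right)|x|^{2-d}$ as $|x|\to\infty$. \end{enumerate}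
   Context: $\mathbb{E}[e^{-sS(t)}]=e^{-t\phi(s)}$. The potential density $u$ is the density of the potential measure $U(A)=\mathbb{E}\int_0^\infty\mathbf{1}_{\{S(t)\in A\}}dt$, so $\int_0^\infty e^{-st}u(t)\,dt=1/\phi(s)$. $f\sim g$ means $f/g\to1$. *)

theory Defs
  imports "HOL-Analysis.Analysis" "HOL-Library.Landau_Symbols"
begin

definition phi_IG :: "real \<Rightarrow> real \<Rightarrow> real \<Rightarrow> real" where
  "phi_IG \<delta> lam s = \<delta> * (sqrt (2 * s + lam\<^sup>2) - lam)"

text \<open>Transition density of the d-dimensional Brownian motion (generator Laplacian),
  d = CARD('n).\<close>
definition heat_kernel :: "real \<Rightarrow> real ^ 'n \<Rightarrow> real ^ 'n \<Rightarrow> real" where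
  "heat_kernel t x y =
     (4 * pi * t) powr (- real CARD('n) / 2) * exp (- (norm (x - y))\<^sup>2 / (4 * t))"

definition is_potential_density :: "(real \<Rightarrow> real) \<Rightarrow> (real \<Rightarrow> real) \<Rightarrow> bool" where
  "is_potential_density phi u \<longleftrightarrow>
     u \<in> borel_measurable lborel \<and> (\<forall>t>0. u t \<ge> 0) \<and>
     (\<forall>s>0. set_integrable lborel {0<..} (\<lambda>t. exp (- s * t) * u t) \<and>
            (LINT t:{0<..}|lborel. exp (- s * t) * u t) = 1 / phi s)"

definition green_fun :: "(real \<Rightarrow> real) \<Rightarrow> real ^ 'n \<Rightarrow> real" where
  "green_fun u x = (LINT t:{0<..}|lborel. heat_kernel t 0 x * u t)"

end

theory Submission
  imports Defs
begin

lemma has_integral_to_set_lborel: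
  fixes f :: "real \<Rightarrow> real"
  assumes I: "(f has_integral I) S" and S: "S \<in> sets borel"
    and fm: "f \<in> borel_measurable borel" and nn: "\<And>x. x \<in> S \<Longrightarrow> f x \<ge> 0"
  shows "set_integrable lborel S f" "(LINT x:S|lborel. f x) = I"
proof -
  define g where "g x = indicator S x * f x" for x
  have gm: "g \<in> borel_measurable borel" unfolding g_def using S fm by measurable
  have gnn: "\<And>x. g x \<ge> 0" using nn by (auto simp: g_def indicator_def)
  have "g = (\<lambda>x. if x \<in> S then f x else 0)" by (auto simp: g_def indicator_def fun_eq_iff)
  then have "(g has_integral I) UNIV"
    using I has_integral_restrict_UNIV[of S f I] by simp
  then have N: "integral\<^sup>N lborel g = I"
    by (rule nn_integral_has_integral_lborel[OF gm gnn])
  have ig: "integrable lborel g"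
    using N gm gnn by (intro integrableI_nonneg) (auto simp: less_top[symmetric])
  then show "set_integrable lborel S f"
    unfolding set_integrable_def g_def by (simp add: mult.commute)
  have "integral\<^sup>L lborel g = I"
  proof -
    have "I \<ge> 0" using \<open>(g has_integral I) UNIV\<close> gnn by (rule has_integral_nonneg)
    then show ?thesis using integral_eq_nn_integral[of g lborel] N gm gnn by simp
  qed
  then show "(LINT x:S|lborel. f x) = I"
    unfolding set_lebesgue_integral_def g_def by simp
qed

lemma gamma_has_integral_Ioi:
  fixes a :: real assumes "a > 0"
  shows "((\<lambda>t. t powr (a - 1) * exp (- t)) has_integral Gamma a) {0<..}"
proof -
  have "((\<lambda>t. t powr (a - 1) / exp t) has_integral Gamma a) {0..}"
    by (rule Gamma_integral_real[OF assms])
  then have "((\<lambda>t. t powr (a - 1) / exp t) has_integral Gamma a) {0<..}"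
    by (rule has_integral_spike_set_eq[THEN iffD1, rotated -1]) (auto intro: negligible_subset[OF negligible_empty])
  then show ?thesis by (simp add: exp_minus field_simps)
qed

lemma gamma_scaled_has_integral:
  fixes a c :: real assumes a: "a > 0" and c: "c > 0"
  shows "((\<lambda>t. t powr (a - 1) * exp (- (c * t))) has_integral Gamma a / c powr a) {0<..}"
proof -
  define f where "f y = y powr (a - 1) * exp (- y)" for y :: real
  have G: "(f has_integral Gamma a) {0<..}" unfolding f_def by (rule gamma_has_integral_Ioi[OF a])
  have img: "(\<lambda>t. c * t) ` {0<..} = {0<..}"
  proof safe
    fix y :: real assume "y > 0"
    then show "y \<in> (\<lambda>t. c * t) ` {0<..}" using c by (intro image_eqI[of _ _ "y / c"]) auto
  qed (use c in auto)
  have "f absolutely_integrable_on {0<..}"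
    using G by (intro nonnegative_absolutely_integrable_1) (auto simp: f_def has_integral_integrable)
  then have "f absolutely_integrable_on ((\<lambda>t. c * t) ` {0<..}) \<and> integral ((\<lambda>t. c * t) ` {0<..}) f = Gamma a"
    using G img by (simp add: integral_unique)
  then have "(\<lambda>x. \<bar>c\<bar> * f (c * x)) absolutely_integrable_on {0<..} \<and> integral {0<..} (\<lambda>x. \<bar>c\<bar> * f (c * x)) = Gamma a"
    by (subst has_absolute_integral_change_of_variables_1'[where g="\<lambda>t. c * t" and g'="\<lambda>_. c"])
       (use c in \<open>auto intro!: derivative_eq_intros inj_onI\<close>)
  then have H: "((\<lambda>x. \<bar>c\<bar> * f (c * x)) has_integral Gamma a) {0<..}"
    by (metis absolutely_integrable_on_def has_integral_integrable_integral)
  have "((\<lambda>x. (1 / c powr a) * (\<bar>c\<bar> * f (c * x))) has_integral (1 / c powr a) * Gamma a) {0<..}"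
    by (rule has_integral_mult_right[OF H])
  moreover have "(1 / c powr a) * (\<bar>c\<bar> * f (c * x)) = x powr (a - 1) * exp (- (c * x))" if "x \<in> {0<..}" for x
    using that c by (simp add: f_def powr_mult powr_diff field_simps)
  ultimately show ?thesis
    by (subst has_integral_cong[symmetric]) (auto simp: field_simps)
qed

lemma inv_gamma_has_integral:
  fixes a b :: real assumes a: "a > 1" and b: "b > 0"
  shows "((\<lambda>t. t powr (- a) * exp (- (b / t))) has_integral b powr (1 - a) * Gamma (a - 1)) {0<..}"
proof -
  define f where "f t = t powr (- a) * exp (- (b / t))" for t :: real
  have G: "((\<lambda>w. w powr ((a - 1) - 1) * exp (- w)) has_integral Gamma (a - 1)) {0<..}"
    by (rule gamma_has_integral_Ioi) (use a in auto)
  have G2: "((\<lambda>w. b powr (1 - a) * (w powr ((a - 1) - 1) * exp (- w))) has_integral b powr (1 - a) * Gamma (a - 1)) {0<..}"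
    by (rule has_integral_mult_right[OF G])
  have eq: "\<bar>- b / w\<^sup>2\<bar> * f (b / w) = b powr (1 - a) * (w powr ((a - 1) - 1) * exp (- w))" if "w \<in> {0<..}" for w
  proof -
    have w: "w > 0" using that by auto
    have "\<bar>- b / w\<^sup>2\<bar> * f (b / w) = b / w\<^sup>2 * (b powr (- a) * w powr a) * exp (- w)"
      using w b by (simp add: f_def powr_divide powr_minus divide_simps)
    also have "\<dots> = b powr (1 - a) * (w powr ((a - 1) - 1) * exp (- w))"
      using w b by (simp add: powr_diff powr_minus power2_eq_square field_simps powr_add)
    finally show ?thesis .
  qed
  have G3: "((\<lambda>w. \<bar>- b / w\<^sup>2\<bar> * f (b / w)) has_integral b powr (1 - a) * Gamma (a - 1)) {0<..}"
    using G2 eq by (subst has_integral_cong) auto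
  have img: "(\<lambda>t. b / t) ` {0<..} = {0<..}"
  proof safe
    fix y :: real assume "y > 0"
    then show "y \<in> (\<lambda>t. b / t) ` {0<..}" using b by (intro image_eqI[of _ _ "b / y"]) auto
  qed (use b in auto)
  have "(\<lambda>w. \<bar>- b / w\<^sup>2\<bar> * f (b / w)) absolutely_integrable_on {0<..}"
    using G3 by (intro nonnegative_absolutely_integrable_1) (auto simp: f_def has_integral_integrable)
  then have "(\<lambda>w. \<bar>- b / w\<^sup>2\<bar> * f (b / w)) absolutely_integrable_on {0<..} \<and> integral {0<..} (\<lambda>w. \<bar>- b / w\<^sup>2\<bar> * f (b / w)) = b powr (1 - a) * Gamma (a - 1)"
    using G3 by (simp add: integral_unique)
  then have "f absolutely_integrable_on ((\<lambda>t. b / t) ` {0<..}) \<and> integral ((\<lambda>t. b / t) ` {0<..}) f = b powr (1 - a) * Gamma (a - 1)"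
    by (subst has_absolute_integral_change_of_variables_1'[where g="\<lambda>t. b / t" and g'="\<lambda>w. - b / w\<^sup>2", symmetric])
       (use b in \<open>auto intro!: derivative_eq_intros inj_onI simp: power2_eq_square field_simps\<close>)
  then show ?thesis unfolding img f_def
    by (metis absolutely_integrable_on_def has_integral_integrable_integral)
qed


lemma moments_cont:
  fixes M N :: "real measure" and \<phi> :: "real \<Rightarrow> real"
  assumes fM: "finite_measure M" and fN: "finite_measure N"
    and sM: "sets M = sets borel" and sN: "sets N = sets borel"
    and aM: "AE t in M. t > 0" and aN: "AE t in N. t > 0"
    and mom: "\<And>n::nat. (\<integral>t. exp (- t) ^ n \<partial>M) = (\<integral>t. exp (- t) ^ n \<partial>N)"
    and \<phi>: "continuous_on UNIV \<phi>"
  shows "(\<integral>t. \<phi> (exp (- t)) \<partial>M) = (\<integral>t. \<phi> (exp (- t)) \<partial>N)"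
proof -
  interpret M: finite_measure M by fact
  interpret N: finite_measure N by fact
  have mM[measurable]: "measurable M = measurable borel" using sM by (intro ext measurable_cong_sets) auto
  have mN[measurable]: "measurable N = measurable borel" using sN by (intro ext measurable_cong_sets) auto
  have \<phi>m[measurable]: "\<phi> \<in> borel_measurable borel" using \<phi> by (rule borel_measurable_continuous_onI)
  define C where "C = measure M (space M) + measure N (space N)"
  have C0: "C \<ge> 0" by (simp add: C_def)
  have main: "\<bar>(\<integral>t. \<phi> (exp (- t)) \<partial>M) - (\<integral>t. \<phi> (exp (- t)) \<partial>N)\<bar> \<le> e * C" if e: "e > 0" for e
  proof -
    obtain P where P: "real_polynomial_function P" and Pa: "\<And>y. y \<in> {0..1} \<Longrightarrow> \<bar>\<phi> y - P y\<bar> < e"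
      using Stone_Weierstrass_real_polynomial_function[of "{0..1::real}" \<phi> e] \<phi> e
      by (auto intro: continuous_on_subset)
    obtain a n where Pe: "P = (\<lambda>x. \<Sum>i\<le>n. a i * x ^ i)"
      using real_polynomial_function_imp_sum[OF P] by blast
    have Pm[measurable]: "P \<in> borel_measurable borel" unfolding Pe by measurable
    have bnd: "AE t in L. norm (\<phi> (exp (- t)) - P (exp (- t))) \<le> e"
      if "AE t in L. t > 0" for L :: "real measure"
      using that
    proof (rule AE_mp, intro AE_I2 impI)
      fix t :: real assume "t > 0"
      then have "exp (- t) \<in> {0..1}" by auto
      from Pa[OF this] show "norm (\<phi> (exp (- t)) - P (exp (- t))) \<le> e" by simp
    qed
    have intmono: "integrable L (\<lambda>t. exp (- t) ^ i)"
      if "finite_measure L" "sets L = sets borel" "AE t in L. t > 0" for L :: "real measure" and i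
    proof -
      interpret L: finite_measure L by fact
      have [measurable]: "measurable L = measurable borel" using that(2) by (intro ext measurable_cong_sets) auto
      show ?thesis
      proof (rule L.integrable_const_bound[where B=1])
        show "AE x in L. norm (exp (- x) ^ i) \<le> 1"
          using that(3) by eventually_elim (auto intro!: power_le_one)
      qed (simp add: measurable_cong_sets[OF that(2) refl])
    qed
    have intphi: "integrable L (\<lambda>t. \<phi> (exp (- t)))"
      if "finite_measure L" "sets L = sets borel" "AE t in L. t > 0" for L :: "real measure"
    proof -
      interpret L: finite_measure L by fact
      have [measurable]: "measurable L = measurable borel" using that(2) by (intro ext measurable_cong_sets) auto
      have "compact (\<phi> ` {0..1})" by (intro compact_continuous_image continuous_on_subset[OF \<phi>]) auto
      then obtain B where B: "\<And>y. y \<in> {0..1} \<Longrightarrow> norm (\<phi> y) \<le> B"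
        by (meson bounded_iff compact_imp_bounded image_eqI)
      show ?thesis
      proof (rule L.integrable_const_bound[where B=B])
        show "AE x in L. norm (\<phi> (exp (- x))) \<le> B"
          using that(3) by eventually_elim (use B in \<open>force\<close>)
      qed (simp add: measurable_cong_sets[OF that(2) refl])
    qed
    have intP: "integrable L (\<lambda>t. P (exp (- t)))"
      if "finite_measure L" "sets L = sets borel" "AE t in L. t > 0" for L :: "real measure"
      unfolding Pe using intmono[OF that] by (auto intro!: integrable_sum integrable_mult_right)
    have PL: "(\<integral>t. P (exp (- t)) \<partial>L) = (\<Sum>i\<le>n. a i * (\<integral>t. exp (- t) ^ i \<partial>L))"
      if "finite_measure L" "sets L = sets borel" "AE t in L. t > 0" for L :: "real measure"
      unfolding Pe using intmono[OF that] by (simp add: integral_sum integrable_mult_right)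
    have PMN: "(\<integral>t. P (exp (- t)) \<partial>M) = (\<integral>t. P (exp (- t)) \<partial>N)"
      using PL[OF fM sM aM] PL[OF fN sN aN] mom by simp
    have est: "\<bar>(\<integral>t. \<phi> (exp (- t)) \<partial>L) - (\<integral>t. P (exp (- t)) \<partial>L)\<bar> \<le> e * measure L (space L)"
      if "finite_measure L" "sets L = sets borel" "AE t in L. t > 0" for L :: "real measure"
    proof -
      interpret L: finite_measure L by fact
      have "\<bar>(\<integral>t. \<phi> (exp (- t)) \<partial>L) - (\<integral>t. P (exp (- t)) \<partial>L)\<bar> = norm (\<integral>t. \<phi> (exp (- t)) - P (exp (- t)) \<partial>L)"
        using intphi[OF that] intP[OF that] by simp
      also have "\<dots> \<le> (\<integral>t. norm (\<phi> (exp (- t)) - P (exp (- t))) \<partial>L)"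
        by (rule integral_norm_bound)
      also have "\<dots> \<le> (\<integral>t. e \<partial>L)"
        using bnd[OF that(3)] by (intro integral_mono_AE) (auto intro!: intphi[OF that] intP[OF that])
      also have "\<dots> = e * measure L (space L)" by simp
      finally show ?thesis .
    qed
    from est[OF fM sM aM] est[OF fN sN aN] PMN show ?thesis
      unfolding C_def by (simp add: algebra_simps)
  qed
  show ?thesis
  proof (rule ccontr)
    define d where "d = \<bar>(\<integral>t. \<phi> (exp (- t)) \<partial>M) - (\<integral>t. \<phi> (exp (- t)) \<partial>N)\<bar>"
    assume "\<not> ?thesis"
    then have d: "d > 0" unfolding d_def by simp
    have "d \<le> (d / (2 * (C + 1))) * C" unfolding d_def by (rule main) (use d C0 d_def in auto)
    also have "\<dots> < d" using d C0 by (simp add: field_simps) (smt (verit) mult_nonneg_nonneg)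
    finally show False by simp
  qed
qed

lemma clamp_lim:
  fixes c y :: real
  shows "(\<lambda>n::nat. max 0 (min 1 (real n * (c - y)))) \<longlonglongrightarrow> (if y < c then 1 else 0)"
proof (cases "y < c")
  case True
  have "eventually (\<lambda>n::nat. real n \<ge> 1 / (c - y)) sequentially"
    by (rule eventually_sequentiallyI[of "nat \<lceil>1 / (c - y)\<rceil>"]) linarith
  then have "eventually (\<lambda>n::nat. max 0 (min 1 (real n * (c - y))) = 1) sequentially"
    by eventually_elim (use True in \<open>auto simp: field_simps\<close>)
  then show ?thesis using True by (simp add: tendsto_eventually)
next
  case False
  have "max 0 (min 1 (real n * (c - y))) = 0" for n :: nat
  proof -
    have "real n * (c - y) \<le> 0" using False by (intro mult_nonneg_nonpos) auto
    then show ?thesis by simp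
  qed
  then show ?thesis using False by simp
qed

lemma moments_measure_eq:
  fixes M N :: "real measure"
  assumes fM: "finite_measure M" and fN: "finite_measure N"
    and sM: "sets M = sets borel" and sN: "sets N = sets borel"
    and aM: "AE t in M. t > 0" and aN: "AE t in N. t > 0"
    and mom: "\<And>n::nat. (\<integral>t. exp (- t) ^ n \<partial>M) = (\<integral>t. exp (- t) ^ n \<partial>N)"
  shows "M = N"
proof -
  interpret M: finite_measure M by fact
  interpret N: finite_measure N by fact
  have lim: "(\<lambda>n::nat. \<integral>t. max 0 (min 1 (real n * (exp (- x) - exp (- t)))) \<partial>L) \<longlonglongrightarrow> measure L {x<..}"
    if "finite_measure L" "sets L = sets borel" for L :: "real measure" and x :: real
  proof -
    interpret L: finite_measure L by fact
    have ms: "measurable L = measurable borel" using that(2) by (intro ext measurable_cong_sets) auto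
    have "(\<lambda>n::nat. \<integral>t. max 0 (min 1 (real n * (exp (- x) - exp (- t)))) \<partial>L) \<longlonglongrightarrow> (\<integral>t. indicator {x<..} t \<partial>L)"
    proof (rule integral_dominated_convergence[where w="\<lambda>_. 1"])
      show "AE t in L. (\<lambda>n::nat. max 0 (min 1 (real n * (exp (- x) - exp (- t))))) \<longlonglongrightarrow> indicator {x<..} t"
      proof (intro AE_I2)
        fix t
        show "(\<lambda>n::nat. max 0 (min 1 (real n * (exp (- x) - exp (- t))))) \<longlonglongrightarrow> indicator {x<..} t"
        proof -
          have "(exp (- t) < exp (- x)) = (x < t)" by simp
          then show ?thesis using clamp_lim[of "exp (- x)" "exp (- t)"] by (simp only: indicator_def of_bool_def greaterThan_iff)
        qed
      qed
    qed (auto simp: ms)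
    also have "(\<integral>t. indicator {x<..} t \<partial>L) = measure L {x<..}"
      using that(2) by simp
    finally show ?thesis .
  qed
  show ?thesis
  proof (rule measure_eqI_lessThan[OF sM sN])
    fix x :: real
    show "emeasure M {x<..} < \<infinity>" by (simp add: M.emeasure_eq_measure)
    have "\<And>n::nat. (\<integral>t. max 0 (min 1 (real n * (exp (- x) - exp (- t)))) \<partial>M) = (\<integral>t. max 0 (min 1 (real n * (exp (- x) - exp (- t)))) \<partial>N)"
      by (rule moments_cont[OF fM fN sM sN aM aN mom]) (intro continuous_intros)
    then have "measure M {x<..} = measure N {x<..}"
      using lim[OF fM sM, of x] lim[OF fN sN, of x] LIMSEQ_unique by (simp only:) 
    then show "emeasure M {x<..} = emeasure N {x<..}"
      by (simp add: M.emeasure_eq_measure N.emeasure_eq_measure)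
  qed
qed

lemma laplace_unique:
  fixes f g :: "real \<Rightarrow> real"
  assumes fm[measurable]: "f \<in> borel_measurable lborel" and gm[measurable]: "g \<in> borel_measurable lborel"
    and fnn: "\<And>t. t > 0 \<Longrightarrow> f t \<ge> 0" and gnn: "\<And>t. t > 0 \<Longrightarrow> g t \<ge> 0"
    and fi: "\<And>s. s > 0 \<Longrightarrow> set_integrable lborel {0<..} (\<lambda>t. exp (- s * t) * f t)"
    and gi: "\<And>s. s > 0 \<Longrightarrow> set_integrable lborel {0<..} (\<lambda>t. exp (- s * t) * g t)"
    and eq: "\<And>s. s > 0 \<Longrightarrow> (LINT t:{0<..}|lborel. exp (- s * t) * f t) = (LINT t:{0<..}|lborel. exp (- s * t) * g t)"
  shows "AE t in lborel. t > 0 \<longrightarrow> f t = g t"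
proof -
  have fm'[measurable]: "f \<in> borel_measurable borel" using fm by simp
  have gm'[measurable]: "g \<in> borel_measurable borel" using gm by simp
  define hf where "hf t = indicator {0<..} t * exp (- t) * f t" for t :: real
  define hg where "hg t = indicator {0<..} t * exp (- t) * g t" for t :: real
  have hfm[measurable]: "hf \<in> borel_measurable borel" unfolding hf_def by measurable
  have hgm[measurable]: "hg \<in> borel_measurable borel" unfolding hg_def by measurable
  have hfnn: "hf t \<ge> 0" for t using fnn[of t] by (auto simp: hf_def indicator_def)
  have hgnn: "hg t \<ge> 0" for t using gnn[of t] by (auto simp: hg_def indicator_def)
  have key: "set_integrable lborel {0<..} (\<lambda>t. exp (- s * t) * h t) \<Longrightarrow>
      (\<lambda>t. indicator {0<..} t * exp (- t) * h t) = k \<Longrightarrow> (\<And>t. k t \<ge> 0) \<Longrightarrow> k \<in> borel_measurable borel \<Longrightarrow>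
      s = 1 \<Longrightarrow> finite_measure (density lborel k) \<and> sets (density lborel k) = sets borel \<and> (AE t in density lborel k. t > 0)"
    for h k and s :: real
  proof -
    assume i: "set_integrable lborel {0<..} (\<lambda>t. exp (- s * t) * h t)"
      and kdef: "(\<lambda>t. indicator {0<..} t * exp (- t) * h t) = k" and knn: "\<And>t. k t \<ge> 0"
      and km: "k \<in> borel_measurable borel" and s1: "s = 1"
    have ik: "integrable lborel k" using i unfolding set_integrable_def kdef[symmetric] s1
      by (simp add: mult.assoc)
    have "emeasure (density lborel k) (space (density lborel k)) = (\<integral>\<^sup>+t. k t \<partial>lborel)"
      using km by (simp add: emeasure_density)
    also have "\<dots> < \<infinity>" using ik knn by (simp add: integrableD(2) integrable_iff_bounded less_top)
    finally have "finite_measure (density lborel k)" by (intro finite_measureI) simp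
    moreover have "AE t in density lborel k. t > 0"
      using km by (subst AE_density) (auto simp: kdef[symmetric] indicator_def)
    ultimately show ?thesis by simp
  qed
  from key[OF fi[of 1] _ hfnn hfm] have Mf: "finite_measure (density lborel hf)" "sets (density lborel hf) = sets borel"
      "AE t in density lborel hf. t > 0"
    by (auto simp: hf_def[abs_def])
  from key[OF gi[of 1] _ hgnn hgm] have Mg: "finite_measure (density lborel hg)" "sets (density lborel hg) = sets borel"
      "AE t in density lborel hg. t > 0"
    by (auto simp: hg_def[abs_def])
  have mom: "(\<integral>t. exp (- t) ^ n \<partial>density lborel hf) = (\<integral>t. exp (- t) ^ n \<partial>density lborel hg)" for n :: nat
  proof -
    have pw: "exp (- t) * exp (- t) ^ n = exp (- (real n + 1) * t)" for t :: real
      by (simp add: exp_of_nat_mult[symmetric] exp_add[symmetric] algebra_simps)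
    have pw2: "exp (- t) * exp (- t) ^ n = exp ((- real n - 1) * t)" for t :: real
      using pw[of t] by (simp add: algebra_simps)
    have "(\<integral>t. exp (- t) ^ n \<partial>density lborel hf) = (\<integral>t. hf t * exp (- t) ^ n \<partial>lborel)"
      by (subst integral_density) (auto simp: hfnn)
    also have "\<dots> = (LINT t:{0<..}|lborel. exp (- (real n + 1) * t) * f t)"
      unfolding set_lebesgue_integral_def hf_def
      by (intro Bochner_Integration.integral_cong refl) (auto simp: pw2 indicator_def)
    also have "\<dots> = (LINT t:{0<..}|lborel. exp (- (real n + 1) * t) * g t)"
      by (rule eq) simp
    also have "\<dots> = (\<integral>t. hg t * exp (- t) ^ n \<partial>lborel)"
      unfolding set_lebesgue_integral_def hg_def
      by (intro Bochner_Integration.integral_cong refl) (auto simp: pw2 indicator_def)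
    also have "\<dots> = (\<integral>t. exp (- t) ^ n \<partial>density lborel hg)"
      by (subst integral_density) (auto simp: hgnn)
    finally show ?thesis .
  qed
  have "density lborel hf = density lborel hg"
    by (rule moments_measure_eq[OF Mf(1) Mg(1) Mf(2) Mg(2) Mf(3) Mg(3) mom])
  then have "AE t in lborel. ennreal (hf t) = ennreal (hg t)"
    by (subst (asm) sigma_finite_measure.density_unique_iff[OF sigma_finite_lborel]) auto
  then show ?thesis
  proof (rule AE_mp, intro AE_I2 impI)
    fix t :: real assume "ennreal (hf t) = ennreal (hg t)" "t > 0"
    then have "hf t = hg t" using hfnn hgnn by (simp add: ennreal_inj)
    then show "f t = g t" using \<open>t > 0\<close> by (simp add: hf_def hg_def)
  qed
qed


definition kf :: "real \<Rightarrow> real \<Rightarrow> real" where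
  "kf lam t = t powr (- 1 / 2) * exp (- (lam\<^sup>2 / 2 * t)) / sqrt (2 * pi)"

definition Kf :: "real \<Rightarrow> real \<Rightarrow> real" where
  "Kf lam t = (LINT \<tau>:{0<..<t}|lborel. kf lam \<tau>)"

definition u0 :: "real \<Rightarrow> real \<Rightarrow> real \<Rightarrow> real" where
  "u0 \<delta> lam t = (lam + 2 * kf lam t + lam\<^sup>2 * Kf lam t) / (2 * \<delta>)"

lemma kf_measurable[measurable]: "kf lam \<in> borel_measurable borel"
  unfolding kf_def by measurable

lemma kf_nonneg: "kf lam t \<ge> 0"
  unfolding kf_def by simp

lemma kf_laplace_has_integral:
  fixes lam s :: real assumes lam: "lam > 0" and s: "s \<ge> 0"
  shows "((\<lambda>t. exp (- s * t) * kf lam t) has_integral 1 / sqrt (2 * s + lam\<^sup>2)) {0<..}"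
proof -
  define c where "c = s + lam\<^sup>2 / 2"
  have c: "c > 0" using lam s by (simp add: c_def add_nonneg_pos)
  have "((\<lambda>t. t powr (1/2 - 1) * exp (- (c * t))) has_integral Gamma (1/2) / c powr (1/2)) {0<..}"
    by (rule gamma_scaled_has_integral) (use c in auto)
  then have "((\<lambda>t. (1 / sqrt (2 * pi)) * (t powr (1/2 - 1) * exp (- (c * t)))) has_integral
      (1 / sqrt (2 * pi)) * (Gamma (1/2) / c powr (1/2))) {0<..}"
    by (rule has_integral_mult_right)
  moreover have "(1 / sqrt (2 * pi)) * (Gamma (1/2) / c powr (1/2)) = 1 / sqrt (2 * s + lam\<^sup>2)"
  proof -
    have "(1 / sqrt (2 * pi)) * (Gamma (1/2) / c powr (1/2)) = sqrt pi / (sqrt 2 * sqrt pi * sqrt c)"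
      using c by (simp add: Gamma_one_half_real powr_half_sqrt real_sqrt_mult)
    also have "\<dots> = 1 / (sqrt 2 * sqrt c)" by simp
    also have "sqrt 2 * sqrt c = sqrt (2 * s + lam\<^sup>2)"
      by (simp add: c_def real_sqrt_mult[symmetric] algebra_simps)
    finally show ?thesis .
  qed
  moreover have "(1 / sqrt (2 * pi)) * (t powr (1/2 - 1) * exp (- (c * t))) = exp (- s * t) * kf lam t"
    if "t \<in> {0<..}" for t
    by (simp add: kf_def c_def exp_add[symmetric] algebra_simps)
  ultimately show ?thesis
    by (subst has_integral_cong[symmetric]) auto
qed

lemma kf_laplace:
  fixes lam s :: real assumes lam: "lam > 0" and s: "s \<ge> 0"
  shows "set_integrable lborel {0<..} (\<lambda>t. exp (- s * t) * kf lam t)"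
    "(LINT t:{0<..}|lborel. exp (- s * t) * kf lam t) = 1 / sqrt (2 * s + lam\<^sup>2)"
  using has_integral_to_set_lborel[OF kf_laplace_has_integral[OF lam s]]
  by (auto simp: kf_nonneg)

lemma kf_int:
  fixes lam :: real assumes lam: "lam > 0"
  shows "set_integrable lborel {0<..} (kf lam)" "(LINT t:{0<..}|lborel. kf lam t) = 1 / lam"
  using kf_laplace[OF lam order.refl] lam by simp_all

lemma nn_to_set_integral:
  fixes h :: "real \<Rightarrow> real"
  assumes hm[measurable]: "h \<in> borel_measurable borel" and A[measurable]: "A \<in> sets borel"
    and nn: "\<And>x. x \<in> A \<Longrightarrow> h x \<ge> 0"
    and N: "(\<integral>\<^sup>+x. ennreal (indicator A x * h x) \<partial>lborel) = ennreal V" and V: "V \<ge> 0"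
  shows "set_integrable lborel A h" "(LINT x:A|lborel. h x) = V"
proof -
  have nn': "indicator A x * h x \<ge> 0" for x using nn[of x] by (auto simp: indicator_def)
  have i: "integrable lborel (\<lambda>x. indicator A x * h x)"
    using N by (intro integrableI_nonneg) (auto simp: nn')
  then show "set_integrable lborel A h" unfolding set_integrable_def by simp
  have "(\<integral>x. indicator A x * h x \<partial>lborel) = enn2real (\<integral>\<^sup>+x. ennreal (indicator A x * h x) \<partial>lborel)"
    by (rule integral_eq_nn_integral) (auto simp: nn')
  then show "(LINT x:A|lborel. h x) = V" unfolding set_lebesgue_integral_def using N V by simp
qed

lemma set_to_nn_integral:
  fixes h :: "real \<Rightarrow> real"
  assumes i: "set_integrable lborel A h" and nn: "\<And>x. x \<in> A \<Longrightarrow> h x \<ge> 0"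
  shows "(\<integral>\<^sup>+x. ennreal (indicator A x * h x) \<partial>lborel) = ennreal (LINT x:A|lborel. h x)"
proof -
  have nn': "indicator A x * h x \<ge> 0" for x using nn[of x] by (auto simp: indicator_def)
  show ?thesis unfolding set_lebesgue_integral_def
    using i nn' by (subst nn_integral_eq_integral) (auto simp: set_integrable_def)
qed

lemma exp_Ioi_nn:
  fixes s :: real assumes s: "s > 0"
  shows "(\<integral>\<^sup>+x. ennreal (indicator {0<..} x * exp (- s * x)) \<partial>lborel) = ennreal (1 / s)"
proof -
  have "((\<lambda>x. x powr (1 - 1) * exp (- (s * x))) has_integral Gamma 1 / s powr 1) {0<..}"
    by (rule gamma_scaled_has_integral) (use s in auto)
  then have "((\<lambda>x. exp (- s * x)) has_integral 1 / s) {0<..}"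
    by (subst has_integral_cong[symmetric, where f="\<lambda>x. x powr (1 - 1) * exp (- (s * x))"]) (use s in auto)
  from has_integral_to_set_lborel[OF this] have "set_integrable lborel {0<..} (\<lambda>x. exp (- s * x))"
      "(LINT x:{0<..}|lborel. exp (- s * x)) = 1 / s" by auto
  from set_to_nn_integral[OF this(1)] this(2) show ?thesis by simp
qed

lemma exp_shift_nn:
  fixes s \<tau> :: real assumes s: "s > 0"
  shows "(\<integral>\<^sup>+t. ennreal (indicator {\<tau><..} t * exp (- s * t)) \<partial>lborel) = ennreal (exp (- s * \<tau>) / s)"
proof -
  have "(\<integral>\<^sup>+t. ennreal (indicator {\<tau><..} t * exp (- s * t)) \<partial>lborel)
      = (\<integral>\<^sup>+x. ennreal (indicator {\<tau><..} (\<tau> + 1 * x) * exp (- s * (\<tau> + 1 * x))) \<partial>lborel)"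
    using nn_integral_real_affine[of "\<lambda>t. ennreal (indicator {\<tau><..} t * exp (- s * t))" 1 \<tau>] by simp
  also have "\<dots> = (\<integral>\<^sup>+x. ennreal (exp (- s * \<tau>)) * ennreal (indicator {0<..} x * exp (- s * x)) \<partial>lborel)"
    by (intro nn_integral_cong) (auto simp: indicator_def ennreal_mult[symmetric] exp_add[symmetric] algebra_simps)
  also have "\<dots> = ennreal (exp (- s * \<tau>)) * ennreal (1 / s)"
    using exp_Ioi_nn[OF s] by (subst nn_integral_cmult) auto
  also have "\<dots> = ennreal (exp (- s * \<tau>) / s)" using s by (simp add: ennreal_mult[symmetric])
  finally show ?thesis .
qed

lemma Kf_int_sub:
  fixes lam :: real assumes lam: "lam > 0"
  shows "set_integrable lborel {0<..<t} (kf lam)"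
  by (rule set_integrable_subset[OF kf_int(1)[OF lam]]) auto

lemma Kf_nonneg: "Kf lam t \<ge> 0"
  unfolding Kf_def set_lebesgue_integral_def
  by (intro integral_nonneg_AE) (auto simp: kf_nonneg)

lemma Kf_mono:
  fixes lam :: real assumes lam: "lam > 0" and le: "t1 \<le> t2"
  shows "Kf lam t1 \<le> Kf lam t2"
  unfolding Kf_def set_lebesgue_integral_def
  using Kf_int_sub[OF lam, of t1] Kf_int_sub[OF lam, of t2] le
  by (intro integral_mono) (auto simp: set_integrable_def kf_nonneg indicator_def)

lemma Kf_le:
  fixes lam :: real assumes lam: "lam > 0"
  shows "Kf lam t \<le> 1 / lam"
proof -
  have "Kf lam t \<le> (LINT t:{0<..}|lborel. kf lam t)"
    unfolding Kf_def set_lebesgue_integral_def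
    using Kf_int_sub[OF lam, of t] kf_int(1)[OF lam]
    by (intro integral_mono) (auto simp: set_integrable_def kf_nonneg indicator_def)
  then show ?thesis using kf_int(2)[OF lam] by simp
qed

lemma Kf_measurable[measurable]:
  fixes lam :: real assumes lam: "lam > 0"
  shows "Kf lam \<in> borel_measurable borel"
  by (rule borel_measurable_mono) (auto simp: mono_def intro: Kf_mono[OF lam])

lemma Kf_lim:
  fixes lam :: real assumes lam: "lam > 0"
  shows "(Kf lam \<longlongrightarrow> 1 / lam) at_top"
proof -
  have "((\<lambda>t. \<integral>x. indicator {0<..<t} x * kf lam x \<partial>lborel) \<longlongrightarrow> (\<integral>x. indicator {0<..} x * kf lam x \<partial>lborel)) at_top"
  proof (rule integral_dominated_convergence_at_top[where w="\<lambda>x. indicator {0<..} x * kf lam x"])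
    show "integrable lborel (\<lambda>x. indicator {0<..} x * kf lam x)"
      using kf_int(1)[OF lam] by (simp add: set_integrable_def)
    show "AE x in lborel. ((\<lambda>t. indicator {0<..<t} x * kf lam x) \<longlongrightarrow> indicator {0<..} x * kf lam x) at_top"
    proof (intro AE_I2)
      fix x :: real
      have "eventually (\<lambda>t. indicator {0<..<t} x * kf lam x = indicator {0<..} x * kf lam x) at_top"
        using eventually_gt_at_top[of x] by eventually_elim (auto simp: indicator_def)
      then show "((\<lambda>t. indicator {0<..<t} x * kf lam x) \<longlongrightarrow> indicator {0<..} x * kf lam x) at_top"
        by (rule tendsto_eventually)
    qed
    show "\<forall>\<^sub>F i in at_top. AE x in lborel. norm (indicator {0<..<i} x * kf lam x) \<le> indicator {0<..} x * kf lam x"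
      by (intro always_eventually allI AE_I2) (auto simp: indicator_def kf_nonneg)
  qed auto
  moreover have "Kf lam = (\<lambda>t. \<integral>x. indicator {0<..<t} x * kf lam x \<partial>lborel)"
    by (simp add: fun_eq_iff Kf_def set_lebesgue_integral_def)
  ultimately show ?thesis using kf_int(2)[OF lam]
    by (simp add: set_lebesgue_integral_def)
qed

lemma Kf_laplace:
  fixes lam s :: real assumes lam: "lam > 0" and s: "s > 0"
  shows "set_integrable lborel {0<..} (\<lambda>t. exp (- s * t) * Kf lam t)"
    "(LINT t:{0<..}|lborel. exp (- s * t) * Kf lam t) = 1 / (s * sqrt (2 * s + lam\<^sup>2))"
proof -
  note [measurable] = Kf_measurable[OF lam]
  define G where "G t \<tau> = ennreal (if 0 < \<tau> \<and> \<tau> < t then exp (- s * t) * kf lam \<tau> else 0)" for t \<tau> :: real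
  have Gm: "case_prod (\<lambda>\<tau> t. G t \<tau>) \<in> borel_measurable (lborel \<Otimes>\<^sub>M lborel)"
    unfolding G_def by measurable
  have inner1: "ennreal (indicator {0<..} t * exp (- s * t) * Kf lam t) = (\<integral>\<^sup>+\<tau>. G t \<tau> \<partial>lborel)" for t
  proof -
    have "ennreal (Kf lam t) = (\<integral>\<^sup>+\<tau>. ennreal (indicator {0<..<t} \<tau> * kf lam \<tau>) \<partial>lborel)"
      unfolding Kf_def by (rule set_to_nn_integral[symmetric, OF Kf_int_sub[OF lam]]) (auto simp: kf_nonneg)
    then have "ennreal (indicator {0<..} t * exp (- s * t)) * ennreal (Kf lam t)
        = (\<integral>\<^sup>+\<tau>. ennreal (indicator {0<..} t * exp (- s * t)) * ennreal (indicator {0<..<t} \<tau> * kf lam \<tau>) \<partial>lborel)"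
      by (simp add: nn_integral_cmult)
    also have "\<dots> = (\<integral>\<^sup>+\<tau>. G t \<tau> \<partial>lborel)"
      by (intro nn_integral_cong) (auto simp: G_def indicator_def ennreal_mult[symmetric] kf_nonneg)
    finally show ?thesis by (simp add: ennreal_mult[symmetric] Kf_nonneg)
  qed
  have inner2: "(\<integral>\<^sup>+t. G t \<tau> \<partial>lborel) = ennreal (indicator {0<..} \<tau> * (exp (- s * \<tau>) * kf lam \<tau> / s))" for \<tau>
  proof (cases "\<tau> > 0")
    case True
    have "(\<integral>\<^sup>+t. G t \<tau> \<partial>lborel) = (\<integral>\<^sup>+t. ennreal (kf lam \<tau>) * ennreal (indicator {\<tau><..} t * exp (- s * t)) \<partial>lborel)"
      using True by (intro nn_integral_cong) (auto simp: G_def indicator_def ennreal_mult[symmetric] mult.commute kf_nonneg)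
    also have "\<dots> = ennreal (kf lam \<tau>) * ennreal (exp (- s * \<tau>) / s)"
      using exp_shift_nn[OF s, of \<tau>] by (subst nn_integral_cmult) auto
    finally show ?thesis using True s by (simp add: ennreal_mult[symmetric] kf_nonneg mult.commute)
  next
    case False
    then show ?thesis by (simp add: G_def)
  qed
  have "(\<integral>\<^sup>+t. ennreal (indicator {0<..} t * (exp (- s * t) * Kf lam t)) \<partial>lborel)
      = (\<integral>\<^sup>+t. (\<integral>\<^sup>+\<tau>. G t \<tau> \<partial>lborel) \<partial>lborel)"
    by (intro nn_integral_cong) (simp add: inner1[symmetric] mult.assoc)
  also have "\<dots> = (\<integral>\<^sup>+\<tau>. (\<integral>\<^sup>+t. G t \<tau> \<partial>lborel) \<partial>lborel)"
    by (rule lborel_pair.Fubini'[OF Gm])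
  also have "\<dots> = (\<integral>\<^sup>+\<tau>. ennreal (indicator {0<..} \<tau> * ((1 / s) * (exp (- s * \<tau>) * kf lam \<tau>))) \<partial>lborel)"
    by (intro nn_integral_cong) (simp add: inner2)
  also have "\<dots> = ennreal (LINT \<tau>:{0<..}|lborel. (1 / s) * (exp (- s * \<tau>) * kf lam \<tau>))"
    by (rule set_to_nn_integral) (use kf_laplace(1)[OF lam, of s] s in \<open>auto simp: kf_nonneg\<close>)
  also have "\<dots> = ennreal (1 / (s * sqrt (2 * s + lam\<^sup>2)))"
    using kf_laplace(2)[OF lam, of s] s by simp
  finally have N: "(\<integral>\<^sup>+t. ennreal (indicator {0<..} t * (exp (- s * t) * Kf lam t)) \<partial>lborel) = ennreal (1 / (s * sqrt (2 * s + lam\<^sup>2)))" .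
  from nn_to_set_integral[OF _ _ _ N] s
  show "set_integrable lborel {0<..} (\<lambda>t. exp (- s * t) * Kf lam t)"
    "(LINT t:{0<..}|lborel. exp (- s * t) * Kf lam t) = 1 / (s * sqrt (2 * s + lam\<^sup>2))"
    by (auto simp: Kf_nonneg)
qed

lemma exp_Ioi_int:
  fixes s :: real assumes s: "s > 0"
  shows "set_integrable lborel {0<..} (\<lambda>t. exp (- s * t))" "(LINT t:{0<..}|lborel. exp (- s * t)) = 1 / s"
  using nn_to_set_integral[OF _ _ _ exp_Ioi_nn[OF s]] s by auto

lemma u0_measurable[measurable]:
  fixes lam :: real assumes lam: "lam > 0"
  shows "u0 \<delta> lam \<in> borel_measurable borel"
  using Kf_measurable[OF lam] unfolding u0_def[abs_def] by measurable

lemma u0_nonneg: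
  fixes lam :: real assumes "lam > 0" "\<delta> > 0"
  shows "u0 \<delta> lam t \<ge> 0"
  using assms kf_nonneg[of lam t] Kf_nonneg[of lam t] unfolding u0_def by simp

lemma laplace_algebra:
  fixes s lam \<delta> :: real assumes s: "s > 0" and lam: "lam > 0" and d: "\<delta> > 0"
  shows "(lam * (1 / s) + 2 * (1 / sqrt (2 * s + lam\<^sup>2)) + lam\<^sup>2 * (1 / (s * sqrt (2 * s + lam\<^sup>2)))) / (2 * \<delta>)
     = 1 / phi_IG \<delta> lam s"
proof -
  define r where "r = sqrt (2 * s + lam\<^sup>2)"
  have r2: "r\<^sup>2 = 2 * s + lam\<^sup>2" unfolding r_def using s by simp
  have "sqrt (lam\<^sup>2) < sqrt (2 * s + lam\<^sup>2)" by (rule real_sqrt_less_mono) (use s in simp)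
  then have rl: "r > lam" unfolding r_def using lam by simp
  have r0: "r > 0" using rl lam by simp
  have "(lam * (1 / s) + 2 * (1 / r) + lam\<^sup>2 * (1 / (s * r))) / (2 * \<delta>) = 1 / (\<delta> * (r - lam))"
  proof -
    have "(lam * (1 / s) + 2 * (1 / r) + lam\<^sup>2 * (1 / (s * r))) = (lam * r + 2 * s + lam\<^sup>2) / (s * r)"
      using s r0 by (simp add: field_simps)
    also have "lam * r + 2 * s + lam\<^sup>2 = r * (r + lam)" using r2 by (simp add: algebra_simps power2_eq_square)
    finally have "(lam * (1 / s) + 2 * (1 / r) + lam\<^sup>2 * (1 / (s * r))) = (r + lam) / s" using r0 by simp
    moreover have "(r + lam) * (r - lam) = 2 * s" using r2 by (simp add: algebra_simps power2_eq_square)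
    then have sr: "s = (r + lam) * (r - lam) / 2" by simp
    have "(r + lam) / s / (2 * \<delta>) = 1 / (\<delta> * (r - lam))"
    proof -
      have "lam * lam < r * r" using rl lam by (intro mult_strict_mono) auto
      then show ?thesis unfolding sr using rl r0 lam d by (simp add: field_simps)
    qed
    ultimately show ?thesis by simp
  qed
  then show ?thesis unfolding phi_IG_def r_def by simp
qed

lemma u0_laplace:
  fixes s lam \<delta> :: real assumes s: "s > 0" and lam: "lam > 0" and d: "\<delta> > 0"
  shows "set_integrable lborel {0<..} (\<lambda>t. exp (- s * t) * u0 \<delta> lam t)"
    "(LINT t:{0<..}|lborel. exp (- s * t) * u0 \<delta> lam t) = 1 / phi_IG \<delta> lam s"
proof -
  note I1 = exp_Ioi_int[OF s] and I2 = kf_laplace[OF lam less_imp_le[OF s]] and I3 = Kf_laplace[OF lam s]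
  have eq: "(\<lambda>t. exp (- s * t) * u0 \<delta> lam t) = (\<lambda>t. (lam * exp (- s * t) + 2 * (exp (- s * t) * kf lam t) + lam\<^sup>2 * (exp (- s * t) * Kf lam t)) / (2 * \<delta>))"
    by (simp add: fun_eq_iff u0_def field_simps)
  have i1: "set_integrable lborel {0<..} (\<lambda>t. lam * exp (- s * t))" using I1 by simp
  have i2: "set_integrable lborel {0<..} (\<lambda>t. 2 * (exp (- s * t) * kf lam t))" using I2 by simp
  have i3: "set_integrable lborel {0<..} (\<lambda>t. lam\<^sup>2 * (exp (- s * t) * Kf lam t))" using I3 by simp
  have i12: "set_integrable lborel {0<..} (\<lambda>t. lam * exp (- s * t) + 2 * (exp (- s * t) * kf lam t))"
    using set_integral_add(1)[OF i1 i2] .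
  have i123: "set_integrable lborel {0<..} (\<lambda>t. lam * exp (- s * t) + 2 * (exp (- s * t) * kf lam t) + lam\<^sup>2 * (exp (- s * t) * Kf lam t))"
    using set_integral_add(1)[OF i12 i3] .
  show "set_integrable lborel {0<..} (\<lambda>t. exp (- s * t) * u0 \<delta> lam t)"
    unfolding eq using i123 by (rule set_integrable_divide)
  have "(LINT t:{0<..}|lborel. exp (- s * t) * u0 \<delta> lam t)
      = (lam * (1 / s) + 2 * (1 / sqrt (2 * s + lam\<^sup>2)) + lam\<^sup>2 * (1 / (s * sqrt (2 * s + lam\<^sup>2)))) / (2 * \<delta>)"
    unfolding eq set_integral_divide_zero set_integral_add(2)[OF i12 i3] set_integral_add(2)[OF i1 i2]
    using I1 I2 I3 by simp
  also have "\<dots> = 1 / phi_IG \<delta> lam s" by (rule laplace_algebra[OF s lam d])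
  finally show "(LINT t:{0<..}|lborel. exp (- s * t) * u0 \<delta> lam t) = 1 / phi_IG \<delta> lam s" .
qed

lemma u_eq_u0:
  fixes \<delta> lam :: real and u :: "real \<Rightarrow> real"
  assumes d: "\<delta> > 0" and lam: "lam > 0" and u: "is_potential_density (phi_IG \<delta> lam) u"
  shows "AE t in lborel. t > 0 \<longrightarrow> u t = u0 \<delta> lam t"
proof (rule laplace_unique)
  show "u \<in> borel_measurable lborel" "\<And>t. 0 < t \<Longrightarrow> 0 \<le> u t"
    "\<And>s. 0 < s \<Longrightarrow> set_integrable lborel {0<..} (\<lambda>t. exp (- s * t) * u t)"
    using u unfolding is_potential_density_def by auto
  show "u0 \<delta> lam \<in> borel_measurable lborel" using u0_measurable[OF lam] by simp
  show "\<And>t. 0 < t \<Longrightarrow> 0 \<le> u0 \<delta> lam t" using u0_nonneg[OF lam d] by auto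
  show "\<And>s. 0 < s \<Longrightarrow> set_integrable lborel {0<..} (\<lambda>t. exp (- s * t) * u0 \<delta> lam t)"
    using u0_laplace(1)[OF _ lam d] by auto
  show "\<And>s. 0 < s \<Longrightarrow> (LINT t:{0<..}|lborel. exp (- s * t) * u t) = (LINT t:{0<..}|lborel. exp (- s * t) * u0 \<delta> lam t)"
    using u u0_laplace(2)[OF _ lam d] unfolding is_potential_density_def by auto
qed


lemma kf_le: "t \<ge> 0 \<Longrightarrow> kf lam t \<le> t powr (- 1 / 2) / sqrt (2 * pi)"
  unfolding kf_def by (intro divide_right_mono mult_left_le) auto

lemma lam2K_le:
  fixes lam :: real assumes lam: "lam > 0" shows "lam\<^sup>2 * Kf lam t \<le> lam"
proof -
  have "lam\<^sup>2 * Kf lam t \<le> lam\<^sup>2 * (1 / lam)" using Kf_le[OF lam, of t] lam by (intro mult_left_mono) auto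
  also have "\<dots> = lam" using lam by (simp add: power2_eq_square)
  finally show ?thesis .
qed

lemma u0_bound:
  fixes lam \<delta> :: real assumes lam: "lam > 0" and d: "\<delta> > 0" and t: "t \<ge> 0"
  shows "u0 \<delta> lam t \<le> lam / \<delta> + t powr (- 1 / 2) / (\<delta> * sqrt (2 * pi))"
proof -
  have "u0 \<delta> lam t \<le> (lam + 2 * (t powr (- 1 / 2) / sqrt (2 * pi)) + lam) / (2 * \<delta>)"
    unfolding u0_def using kf_le[OF t, of lam] lam2K_le[OF lam, of t] d
    by (intro divide_right_mono) auto
  also have "\<dots> = lam / \<delta> + t powr (- 1 / 2) / (\<delta> * sqrt (2 * pi))"
    using d by (simp add: field_simps)
  finally show ?thesis .
qed

lemma u0_at_top:
  fixes lam \<delta> :: real assumes lam: "lam > 0" and d: "\<delta> > 0"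
  shows "(u0 \<delta> lam \<longlongrightarrow> lam / \<delta>) at_top"
proof -
  have p: "((\<lambda>t::real. t powr (- 1 / 2) / sqrt (2 * pi)) \<longlongrightarrow> 0) at_top"
    by (intro tendsto_divide_zero tendsto_neg_powr filterlim_ident) auto
  have k: "(kf lam \<longlongrightarrow> 0) at_top"
  proof (rule tendsto_sandwich[OF _ _ tendsto_const p])
    show "\<forall>\<^sub>F n in at_top. kf lam n \<le> n powr (- 1 / 2) / sqrt (2 * pi)"
      using eventually_ge_at_top[of "0::real"] by eventually_elim (rule kf_le)
  qed (auto intro: always_eventually kf_nonneg)
  have "((\<lambda>t. (lam + 2 * kf lam t + lam\<^sup>2 * Kf lam t) / (2 * \<delta>)) \<longlongrightarrow> (lam + 2 * 0 + lam\<^sup>2 * (1 / lam)) / (2 * \<delta>)) at_top"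
    by (intro tendsto_intros k Kf_lim[OF lam]) (use d in auto)
  moreover have "(lam + 2 * 0 + lam\<^sup>2 * (1 / lam)) / (2 * \<delta>) = lam / \<delta>"
    using lam d by (simp add: power2_eq_square field_simps)
  ultimately show ?thesis unfolding u0_def[abs_def] by simp
qed

lemma u0_at_0:
  fixes lam \<delta> :: real assumes lam: "lam > 0" and d: "\<delta> > 0"
  shows "((\<lambda>t. sqrt t * u0 \<delta> lam t) \<longlongrightarrow> 1 / (\<delta> * sqrt (2 * pi))) (at_right 0)"
proof -
  have s0: "(sqrt \<longlongrightarrow> 0) (at_right 0)"
    using tendsto_real_sqrt[OF tendsto_ident_at[of 0 "{0<..}"]] by simp
  have sK: "((\<lambda>t. sqrt t * Kf lam t) \<longlongrightarrow> 0) (at_right 0)"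
  proof (rule tendsto_sandwich[where f="\<lambda>_. 0" and h="\<lambda>t. sqrt t * (1 / lam)"])
    show "\<forall>\<^sub>F t in at_right 0. 0 \<le> sqrt t * Kf lam t"
      using eventually_at_right_less[of 0] by eventually_elim (simp add: Kf_nonneg)
    show "\<forall>\<^sub>F t in at_right 0. sqrt t * Kf lam t \<le> sqrt t * (1 / lam)"
      using eventually_at_right_less[of 0] by eventually_elim (use mult_left_mono[OF Kf_le[OF lam], of "sqrt _"] in simp)
    show "((\<lambda>t. sqrt t * (1 / lam)) \<longlongrightarrow> 0) (at_right 0)"
      using tendsto_mult[OF s0 tendsto_const[of "1 / lam"]] by simp
  qed simp
  have sk: "((\<lambda>t. sqrt t * kf lam t) \<longlongrightarrow> 1 / sqrt (2 * pi)) (at_right 0)"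
  proof -
    have "((\<lambda>t. exp (- (lam\<^sup>2 / 2 * t)) / sqrt (2 * pi)) \<longlongrightarrow> exp (- (lam\<^sup>2 / 2 * 0)) / sqrt (2 * pi)) (at_right 0)"
      by (intro tendsto_intros) auto
    moreover have "\<forall>\<^sub>F t in at_right 0. exp (- (lam\<^sup>2 / 2 * t)) / sqrt (2 * pi) = sqrt t * kf lam t"
      using eventually_at_right_less[of 0]
    proof eventually_elim
      case (elim t)
      then have "sqrt t * t powr (- 1 / 2) = t powr (1 / 2) * t powr (- 1 / 2)"
        by (simp add: powr_half_sqrt)
      also have "\<dots> = 1" using elim by (simp add: powr_add[symmetric])
      finally have "sqrt t * t powr (- 1 / 2) = 1" .
      then show ?case unfolding kf_def by (simp add: field_simps)
    qed
    ultimately show ?thesis by (auto intro: Lim_transform_eventually)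
  qed
  have "((\<lambda>t. (lam * sqrt t + 2 * (sqrt t * kf lam t) + lam\<^sup>2 * (sqrt t * Kf lam t)) / (2 * \<delta>))
      \<longlongrightarrow> (lam * 0 + 2 * (1 / sqrt (2 * pi)) + lam\<^sup>2 * 0) / (2 * \<delta>)) (at_right 0)"
    by (intro tendsto_intros s0 sk sK) (use d in auto)
  moreover have "(lam * 0 + 2 * (1 / sqrt (2 * pi)) + lam\<^sup>2 * 0) / (2 * \<delta>) = 1 / (\<delta> * sqrt (2 * pi))"
    using d by simp
  moreover have "(lam * sqrt t + 2 * (sqrt t * kf lam t) + lam\<^sup>2 * (sqrt t * Kf lam t)) / (2 * \<delta>) = sqrt t * u0 \<delta> lam t" for t
    unfolding u0_def by (simp add: field_simps)
  ultimately show ?thesis by (simp add: mult.commute)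
qed


definition Pk :: "real \<Rightarrow> real \<Rightarrow> real \<Rightarrow> real" where
  "Pk d r t = (4 * pi * t) powr (- d / 2) * exp (- r\<^sup>2 / (4 * t))"

lemma Pk_nonneg: "Pk d r t \<ge> 0" unfolding Pk_def by simp

lemma Pk_measurable[measurable]: "Pk d r \<in> borel_measurable borel"
  unfolding Pk_def[abs_def] by measurable

lemma hp1:
  fixes r x d :: real assumes r: "r > 0" and x: "x > 0"
  shows "(4 * pi * (r\<^sup>2 * x)) powr (- d / 2) = r powr (- d) * (4 * pi * x) powr (- d / 2)"
proof -
  have "(4 * pi * (r\<^sup>2 * x)) powr (- d / 2) = (r\<^sup>2) powr (- d / 2) * (4 * pi * x) powr (- d / 2)"
    using r x by (subst powr_mult[symmetric]) (auto simp: algebra_simps)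
  also have "(r\<^sup>2) powr (- d / 2) = r powr (- d)"
  proof -
    have "r\<^sup>2 = r powr 2" using r by simp
    then have "(r\<^sup>2) powr (- d / 2) = r powr (2 * (- d / 2))" by (simp only: powr_powr)
    then show ?thesis by simp
  qed
  finally show ?thesis .
qed

lemma Pk_scale:
  fixes r x d :: real assumes r: "r > 0" and x: "x > 0"
  shows "Pk d r (r\<^sup>2 * x) = r powr (- d) * Pk d 1 x"
proof -
  have "- r\<^sup>2 / (4 * (r\<^sup>2 * x)) = - 1\<^sup>2 / (4 * x)" using r x by (simp add: field_simps power2_eq_square)
  then show ?thesis unfolding Pk_def hp1[OF r x] by simp
qed

lemma hp2:
  fixes r v :: real assumes r: "r > 0" and v: "v > 0"
  shows "(r\<^sup>2 * v) powr (- 1 / 2) = v powr (- 1 / 2) / r"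
proof -
  have "(r\<^sup>2 * v) powr (- 1 / 2) = (r\<^sup>2) powr (- 1 / 2) * v powr (- 1 / 2)"
    using r v by (subst powr_mult) auto
  also have "(r\<^sup>2) powr (- 1 / 2) = r powr (- 1)"
  proof -
    have "r\<^sup>2 = r powr 2" using r by simp
    then have "(r\<^sup>2) powr (- 1 / 2) = r powr (2 * (- 1 / 2))" by (simp only: powr_powr)
    then show ?thesis by simp
  qed
  also have "r powr (- 1) = 1 / r" using r by (simp add: powr_minus divide_inverse)
  finally show ?thesis by simp
qed

lemma scaling:
  fixes r d :: real and w :: "real \<Rightarrow> real" assumes r: "r > 0"
  shows "(LINT t:{0<..}|lborel. Pk d r t * w t) = r powr (2 - d) * (LINT v:{0<..}|lborel. Pk d 1 v * w (r\<^sup>2 * v))"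
proof -
  have "(LINT t:{0<..}|lborel. Pk d r t * w t) = (\<integral>t. indicator {0<..} t * (Pk d r t * w t) \<partial>lborel)"
    by (simp add: set_lebesgue_integral_def)
  also have "\<dots> = \<bar>r\<^sup>2\<bar> *\<^sub>R (\<integral>x. indicator {0<..} (0 + r\<^sup>2 * x) * (Pk d r (0 + r\<^sup>2 * x) * w (0 + r\<^sup>2 * x)) \<partial>lborel)"
    by (rule lborel_integral_real_affine) (use r in auto)
  also have "(\<lambda>x. indicator {0<..} (0 + r\<^sup>2 * x) * (Pk d r (0 + r\<^sup>2 * x) * w (0 + r\<^sup>2 * x)))
      = (\<lambda>x. r powr (- d) * (indicator {0<..} x * (Pk d 1 x * w (r\<^sup>2 * x))))"
  proof
    fix x :: real
    show "indicator {0<..} (0 + r\<^sup>2 * x) * (Pk d r (0 + r\<^sup>2 * x) * w (0 + r\<^sup>2 * x))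
      = r powr (- d) * (indicator {0<..} x * (Pk d 1 x * w (r\<^sup>2 * x)))"
      using r by (cases "x > 0") (auto simp: Pk_scale indicator_def zero_less_mult_iff)
  qed
  also have "\<bar>r\<^sup>2\<bar> *\<^sub>R (\<integral>x. r powr (- d) * (indicator {0<..} x * (Pk d 1 x * w (r\<^sup>2 * x))) \<partial>lborel)
      = r\<^sup>2 * r powr (- d) * (LINT v:{0<..}|lborel. Pk d 1 v * w (r\<^sup>2 * v))"
    by (simp add: set_lebesgue_integral_def)
  also have "r\<^sup>2 * r powr (- d) = r powr (2 - d)"
  proof -
    have "r\<^sup>2 = r powr 2" using r by simp
    then show ?thesis using r by (simp add: powr_diff powr_minus divide_inverse)
  qed
  finally show ?thesis .
qed

lemma Pk1_eq:
  fixes d v :: real assumes v: "v > 0"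
  shows "Pk d 1 v = (4 * pi) powr (- d / 2) * (v powr (- (d / 2)) * exp (- ((1 / 4) / v)))"
  unfolding Pk_def using v by (simp add: powr_mult)

lemma Pk_int:
  fixes d :: real assumes d: "d > 2"
  shows "set_integrable lborel {0<..} (Pk d 1)"
    "(LINT v:{0<..}|lborel. Pk d 1 v) = (4 * pi) powr (- d / 2) * ((1 / 4) powr (1 - d / 2) * Gamma (d / 2 - 1))"
proof -
  have "((\<lambda>t. t powr (- (d / 2)) * exp (- ((1 / 4) / t))) has_integral (1 / 4) powr (1 - d / 2) * Gamma (d / 2 - 1)) {0<..}"
    by (rule inv_gamma_has_integral) (use d in auto)
  then have "((\<lambda>t. (4 * pi) powr (- d / 2) * (t powr (- (d / 2)) * exp (- ((1 / 4) / t)))) has_integral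
      (4 * pi) powr (- d / 2) * ((1 / 4) powr (1 - d / 2) * Gamma (d / 2 - 1))) {0<..}"
    by (rule has_integral_mult_right)
  then have "(Pk d 1 has_integral (4 * pi) powr (- d / 2) * ((1 / 4) powr (1 - d / 2) * Gamma (d / 2 - 1))) {0<..}"
    by (subst has_integral_cong[where g="\<lambda>t. (4 * pi) powr (- d / 2) * (t powr (- (d / 2)) * exp (- ((1 / 4) / t)))"])
       (auto simp: Pk1_eq)
  from has_integral_to_set_lborel[OF this] show "set_integrable lborel {0<..} (Pk d 1)"
    "(LINT v:{0<..}|lborel. Pk d 1 v) = (4 * pi) powr (- d / 2) * ((1 / 4) powr (1 - d / 2) * Gamma (d / 2 - 1))"
    by (auto simp: Pk_nonneg)
qed

lemma Pk_int2:
  fixes d :: real assumes d: "d > 2"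
  shows "set_integrable lborel {0<..} (\<lambda>v. Pk d 1 v * v powr (- 1 / 2))"
    "(LINT v:{0<..}|lborel. Pk d 1 v * v powr (- 1 / 2)) = (4 * pi) powr (- d / 2) * ((1 / 4) powr (1 - (d + 1) / 2) * Gamma ((d + 1) / 2 - 1))"
proof -
  have "((\<lambda>t. t powr (- ((d + 1) / 2)) * exp (- ((1 / 4) / t))) has_integral (1 / 4) powr (1 - (d + 1) / 2) * Gamma ((d + 1) / 2 - 1)) {0<..}"
    by (rule inv_gamma_has_integral) (use d in auto)
  then have "((\<lambda>t. (4 * pi) powr (- d / 2) * (t powr (- ((d + 1) / 2)) * exp (- ((1 / 4) / t)))) has_integral
      (4 * pi) powr (- d / 2) * ((1 / 4) powr (1 - (d + 1) / 2) * Gamma ((d + 1) / 2 - 1))) {0<..}"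
    by (rule has_integral_mult_right)
  moreover have "Pk d 1 t * t powr (- 1 / 2) = (4 * pi) powr (- d / 2) * (t powr (- ((d + 1) / 2)) * exp (- ((1 / 4) / t)))"
    if "t \<in> {0<..}" for t
  proof -
    have t: "t > 0" using that by simp
    have "t powr (- (d / 2)) * t powr (- 1 / 2) = t powr (- ((d + 1) / 2))"
    proof -
      have "- (d / 2) + - 1 / 2 = - ((d + 1) / 2)" by (simp add: field_simps)
      then show ?thesis using t by (simp only: powr_add[symmetric])
    qed
    then show ?thesis unfolding Pk1_eq[OF t] by (simp add: mult_ac)
  qed
  ultimately have "((\<lambda>v. Pk d 1 v * v powr (- 1 / 2)) has_integral (4 * pi) powr (- d / 2) * ((1 / 4) powr (1 - (d + 1) / 2) * Gamma ((d + 1) / 2 - 1))) {0<..}"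
    by (subst has_integral_cong) auto
  from has_integral_to_set_lborel[OF this] show "set_integrable lborel {0<..} (\<lambda>v. Pk d 1 v * v powr (- 1 / 2))"
    "(LINT v:{0<..}|lborel. Pk d 1 v * v powr (- 1 / 2)) = (4 * pi) powr (- d / 2) * ((1 / 4) powr (1 - (d + 1) / 2) * Gamma ((d + 1) / 2 - 1))"
    by (auto simp: Pk_nonneg)
qed

lemma W_int:
  fixes d A B :: real assumes d: "d > 2"
  shows "set_integrable lborel {0<..} (\<lambda>v. Pk d 1 v * (A + B * v powr (- 1 / 2)))"
proof -
  have "(\<lambda>v. Pk d 1 v * (A + B * v powr (- 1 / 2))) = (\<lambda>v. A * Pk d 1 v + B * (Pk d 1 v * v powr (- 1 / 2)))"
    by (simp add: fun_eq_iff algebra_simps)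
  moreover have "set_integrable lborel {0<..} (\<lambda>v. A * Pk d 1 v + B * (Pk d 1 v * v powr (- 1 / 2)))"
    by (intro set_integral_add(1) set_integrable_mult_right Pk_int(1)[OF d] Pk_int2(1)[OF d])
  ultimately show ?thesis by simp
qed

lemma lim_inf:
  fixes d lam \<delta> :: real assumes d: "d > 2" and lam: "lam > 0" and dl: "\<delta> > 0"
  shows "((\<lambda>r. LINT v:{0<..}|lborel. Pk d 1 v * u0 \<delta> lam (r\<^sup>2 * v)) \<longlongrightarrow> lam / \<delta> * (LINT v:{0<..}|lborel. Pk d 1 v)) at_top"
proof -
  define A where "A = lam / \<delta>"
  define B where "B = 1 / (\<delta> * sqrt (2 * pi))"
  note [measurable] = u0_measurable[OF lam]
  have "((\<lambda>r. \<integral>v. indicator {0<..} v * (Pk d 1 v * u0 \<delta> lam (r\<^sup>2 * v)) \<partial>lborel)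
      \<longlongrightarrow> (\<integral>v. indicator {0<..} v * (Pk d 1 v * A) \<partial>lborel)) at_top"
  proof (rule integral_dominated_convergence_at_top[where w="\<lambda>v. indicator {0<..} v * (Pk d 1 v * (A + B * v powr (- 1 / 2)))"])
    show "integrable lborel (\<lambda>v. indicator {0<..} v * (Pk d 1 v * (A + B * v powr (- 1 / 2))))"
      using W_int[OF d, of A B] by (simp add: set_integrable_def)
    show "AE v in lborel. ((\<lambda>r. indicator {0<..} v * (Pk d 1 v * u0 \<delta> lam (r\<^sup>2 * v))) \<longlongrightarrow> indicator {0<..} v * (Pk d 1 v * A)) at_top"
    proof (intro AE_I2)
      fix v :: real
      show "((\<lambda>r. indicator {0<..} v * (Pk d 1 v * u0 \<delta> lam (r\<^sup>2 * v))) \<longlongrightarrow> indicator {0<..} v * (Pk d 1 v * A)) at_top"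
      proof (cases "v > 0")
        case True
        have "filterlim (\<lambda>r::real. v * r\<^sup>2) at_top at_top"
          by (rule filterlim_tendsto_pos_mult_at_top[OF tendsto_const True])
             (intro filterlim_pow_at_top filterlim_ident, auto)
        then have "filterlim (\<lambda>r::real. r\<^sup>2 * v) at_top at_top" by (simp add: mult.commute)
        from filterlim_compose[OF u0_at_top[OF lam dl] this]
        have "((\<lambda>r. u0 \<delta> lam (r\<^sup>2 * v)) \<longlongrightarrow> A) at_top" unfolding A_def .
        then show ?thesis by (intro tendsto_intros)
      qed simp
    qed
    show "\<forall>\<^sub>F r in at_top. AE v in lborel. norm (indicator {0<..} v * (Pk d 1 v * u0 \<delta> lam (r\<^sup>2 * v)))
        \<le> indicator {0<..} v * (Pk d 1 v * (A + B * v powr (- 1 / 2)))"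
      using eventually_ge_at_top[of "1::real"]
    proof eventually_elim
      case (elim r)
      show ?case
      proof (intro AE_I2)
        fix v :: real
        show "norm (indicator {0<..} v * (Pk d 1 v * u0 \<delta> lam (r\<^sup>2 * v))) \<le> indicator {0<..} v * (Pk d 1 v * (A + B * v powr (- 1 / 2)))"
        proof (cases "v > 0")
          case True
          have r: "r > 0" using elim by simp
          have "u0 \<delta> lam (r\<^sup>2 * v) \<le> A + (r\<^sup>2 * v) powr (- 1 / 2) / (\<delta> * sqrt (2 * pi))"
            using u0_bound[OF lam dl, of "r\<^sup>2 * v"] True by (simp add: A_def)
          also have "(r\<^sup>2 * v) powr (- 1 / 2) / (\<delta> * sqrt (2 * pi)) = B * (v powr (- 1 / 2) / r)"
            using hp2[OF r True] by (simp add: B_def)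
          also have "B * (v powr (- 1 / 2) / r) \<le> B * v powr (- 1 / 2)"
          proof -
            have "v powr (- 1 / 2) / r \<le> v powr (- 1 / 2) / 1"
              using elim by (intro divide_left_mono) auto
            then show ?thesis using dl unfolding B_def by (intro mult_left_mono) auto
          qed
          finally have "u0 \<delta> lam (r\<^sup>2 * v) \<le> A + B * v powr (- 1 / 2)" by simp
          moreover have "u0 \<delta> lam (r\<^sup>2 * v) \<ge> 0" by (rule u0_nonneg[OF lam dl])
          ultimately show ?thesis using True Pk_nonneg[of d 1 v]
            by (simp add: abs_mult mult_left_mono)
        qed simp
      qed
    qed
  qed auto
  then show ?thesis
    unfolding set_lebesgue_integral_def A_def
    by (simp add: mult_ac)
qed

lemma sqrt_powr_half: "v > 0 \<Longrightarrow> sqrt v * v powr (- 1 / 2) = 1"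
proof -
  assume t: "v > 0"
  have "sqrt v * v powr (- 1 / 2) = v powr (1 / 2) * v powr (- 1 / 2)"
    by (simp add: powr_half_sqrt t less_imp_le)
  also have "\<dots> = 1" using t by (simp add: powr_add[symmetric])
  finally show ?thesis .
qed

lemma lim_0:
  fixes d lam \<delta> :: real assumes d: "d > 2" and lam: "lam > 0" and dl: "\<delta> > 0"
  shows "((\<lambda>T. LINT v:{0<..}|lborel. Pk d 1 v * (inverse T * u0 \<delta> lam ((inverse T)\<^sup>2 * v)))
     \<longlongrightarrow> 1 / (\<delta> * sqrt (2 * pi)) * (LINT v:{0<..}|lborel. Pk d 1 v * v powr (- 1 / 2))) at_top"
proof -
  define A where "A = lam / \<delta>"
  define B where "B = 1 / (\<delta> * sqrt (2 * pi))"
  note [measurable] = u0_measurable[OF lam]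
  have "((\<lambda>T. \<integral>v. indicator {0<..} v * (Pk d 1 v * (inverse T * u0 \<delta> lam ((inverse T)\<^sup>2 * v))) \<partial>lborel)
      \<longlongrightarrow> (\<integral>v. indicator {0<..} v * (Pk d 1 v * (B * v powr (- 1 / 2))) \<partial>lborel)) at_top"
  proof (rule integral_dominated_convergence_at_top[where w="\<lambda>v. indicator {0<..} v * (Pk d 1 v * (A + B * v powr (- 1 / 2)))"])
    show "integrable lborel (\<lambda>v. indicator {0<..} v * (Pk d 1 v * (A + B * v powr (- 1 / 2))))"
      using W_int[OF d, of A B] by (simp add: set_integrable_def)
    show "AE v in lborel. ((\<lambda>T. indicator {0<..} v * (Pk d 1 v * (inverse T * u0 \<delta> lam ((inverse T)\<^sup>2 * v))))
        \<longlongrightarrow> indicator {0<..} v * (Pk d 1 v * (B * v powr (- 1 / 2)))) at_top"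
    proof (intro AE_I2)
      fix v :: real
      show "((\<lambda>T. indicator {0<..} v * (Pk d 1 v * (inverse T * u0 \<delta> lam ((inverse T)\<^sup>2 * v))))
        \<longlongrightarrow> indicator {0<..} v * (Pk d 1 v * (B * v powr (- 1 / 2)))) at_top"
      proof (cases "v > 0")
        case True
        have t0: "((\<lambda>T::real. (inverse T)\<^sup>2 * v) \<longlongrightarrow> 0\<^sup>2 * v) at_top"
          by (intro tendsto_intros tendsto_inverse_0_at_top filterlim_ident)
        have "filterlim (\<lambda>T::real. (inverse T)\<^sup>2 * v) (at_right 0) at_top"
          unfolding filterlim_at
        proof
          show "\<forall>\<^sub>F T in at_top. (inverse T)\<^sup>2 * v \<in> {0<..} \<and> (inverse T)\<^sup>2 * v \<noteq> 0"
            using eventually_gt_at_top[of "0::real"] by eventually_elim (use True in auto)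
        qed (use t0 in simp)
        from filterlim_compose[OF u0_at_0[OF lam dl] this]
        have l1: "((\<lambda>T. sqrt ((inverse T)\<^sup>2 * v) * u0 \<delta> lam ((inverse T)\<^sup>2 * v)) \<longlongrightarrow> B) at_top"
          unfolding B_def .
        have l2: "((\<lambda>T. v powr (- 1 / 2) * (sqrt ((inverse T)\<^sup>2 * v) * u0 \<delta> lam ((inverse T)\<^sup>2 * v))) \<longlongrightarrow> v powr (- 1 / 2) * B) at_top"
          by (intro tendsto_intros l1)
        have ev: "\<forall>\<^sub>F T in at_top. v powr (- 1 / 2) * (sqrt ((inverse T)\<^sup>2 * v) * u0 \<delta> lam ((inverse T)\<^sup>2 * v))
            = inverse T * u0 \<delta> lam ((inverse T)\<^sup>2 * v)"
          using eventually_gt_at_top[of "0::real"]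
        proof eventually_elim
          case (elim T)
          have "sqrt ((inverse T)\<^sup>2 * v) = inverse T * sqrt v"
            using elim by (simp add: real_sqrt_mult)
          then show ?case using sqrt_powr_half[OF True] by (simp add: mult_ac)
        qed
        have "((\<lambda>T. inverse T * u0 \<delta> lam ((inverse T)\<^sup>2 * v)) \<longlongrightarrow> v powr (- 1 / 2) * B) at_top"
          by (rule Lim_transform_eventually[OF l2 ev])
        from tendsto_mult_left[OF tendsto_mult_left[OF this, of "Pk d 1 v"], of "indicator {0<..} v"]
        show ?thesis by (simp add: mult_ac)
      qed simp
    qed
    show "\<forall>\<^sub>F T in at_top. AE v in lborel. norm (indicator {0<..} v * (Pk d 1 v * (inverse T * u0 \<delta> lam ((inverse T)\<^sup>2 * v))))
        \<le> indicator {0<..} v * (Pk d 1 v * (A + B * v powr (- 1 / 2)))"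
      using eventually_ge_at_top[of "1::real"]
    proof eventually_elim
      case (elim T)
      define r where "r = inverse T"
      have r: "r > 0" "r \<le> 1" using elim by (auto simp: r_def field_simps)
      show ?case
      proof (intro AE_I2)
        fix v :: real
        show "norm (indicator {0<..} v * (Pk d 1 v * (inverse T * u0 \<delta> lam ((inverse T)\<^sup>2 * v)))) \<le> indicator {0<..} v * (Pk d 1 v * (A + B * v powr (- 1 / 2)))"
        proof (cases "v > 0")
          case True
          have "r * u0 \<delta> lam (r\<^sup>2 * v) \<le> r * (A + (r\<^sup>2 * v) powr (- 1 / 2) / (\<delta> * sqrt (2 * pi)))"
            using u0_bound[OF lam dl, of "r\<^sup>2 * v"] True r by (intro mult_left_mono) (auto simp: A_def)
          also have "\<dots> = r * A + B * v powr (- 1 / 2)"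
            using hp2[OF r(1) True] r by (simp add: B_def field_simps)
          also have "\<dots> \<le> A + B * v powr (- 1 / 2)"
          proof -
            have "r * A \<le> 1 * A" using r lam dl by (intro mult_right_mono) (auto simp: A_def)
            then show ?thesis by simp
          qed
          finally have "r * u0 \<delta> lam (r\<^sup>2 * v) \<le> A + B * v powr (- 1 / 2)" .
          moreover have "r * u0 \<delta> lam (r\<^sup>2 * v) \<ge> 0" using r u0_nonneg[OF lam dl] by simp
          ultimately show ?thesis using True Pk_nonneg[of d 1 v] elim u0_nonneg[OF lam dl, of "(inverse T)\<^sup>2 * v"]
            by (simp add: abs_mult mult_left_mono r_def)
        qed simp
      qed
    qed
  qed auto
  then show ?thesis
    unfolding set_lebesgue_integral_def B_def
    by (simp add: mult_ac)
qed


lemma green_eq_H: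
  fixes \<delta> lam :: real and u :: "real \<Rightarrow> real" and x :: "real ^ 'n"
  assumes d: "\<delta> > 0" and lam: "lam > 0" and u: "is_potential_density (phi_IG \<delta> lam) u"
  shows "green_fun u x = (LINT t:{0<..}|lborel. Pk (real CARD('n)) (norm x) t * u0 \<delta> lam t)"
proof -
  have um[measurable]: "u \<in> borel_measurable borel" using u unfolding is_potential_density_def by simp
  note [measurable] = u0_measurable[OF lam]
  have hk: "heat_kernel t 0 x = Pk (real CARD('n)) (norm x) t" for t
    by (simp add: heat_kernel_def Pk_def)
  have "green_fun u x = (LINT t:{0<..}|lborel. Pk (real CARD('n)) (norm x) t * u t)"
    unfolding green_fun_def hk ..
  also have "\<dots> = (LINT t:{0<..}|lborel. Pk (real CARD('n)) (norm x) t * u0 \<delta> lam t)"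
  proof (rule set_lebesgue_integral_cong_AE)
    show "AE t\<in>{0<..} in lborel. Pk (real CARD('n)) (norm x) t * u t = Pk (real CARD('n)) (norm x) t * u0 \<delta> lam t"
      using u_eq_u0[OF d lam u] by eventually_elim auto
  qed auto
  finally show ?thesis .
qed

lemma H_scaled:
  fixes r d :: real assumes r: "r > 0"
  shows "(LINT t:{0<..}|lborel. Pk d r t * u0 \<delta> lam t) = r powr (2 - d) * (LINT v:{0<..}|lborel. Pk d 1 v * u0 \<delta> lam (r\<^sup>2 * v))"
  by (rule scaling[OF r])

lemma H_lim_0:
  fixes d lam \<delta> :: real assumes d: "d > 2" and lam: "lam > 0" and dl: "\<delta> > 0"
  shows "((\<lambda>r. r powr (d - 1) * (LINT t:{0<..}|lborel. Pk d r t * u0 \<delta> lam t))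
     \<longlongrightarrow> 1 / (\<delta> * sqrt (2 * pi)) * (LINT v:{0<..}|lborel. Pk d 1 v * v powr (- 1 / 2))) (at_right 0)"
proof -
  define F where "F r = (LINT v:{0<..}|lborel. Pk d 1 v * (r * u0 \<delta> lam (r\<^sup>2 * v)))" for r :: real
  have "(F \<longlongrightarrow> 1 / (\<delta> * sqrt (2 * pi)) * (LINT v:{0<..}|lborel. Pk d 1 v * v powr (- 1 / 2))) (at_right 0)"
    unfolding filterlim_at_right_to_top F_def using lim_0[OF d lam dl] by simp
  moreover have "\<forall>\<^sub>F r in at_right 0. F r = r powr (d - 1) * (LINT t:{0<..}|lborel. Pk d r t * u0 \<delta> lam t)"
    using eventually_at_right_less[of "0::real"]
  proof eventually_elim
    case (elim r)
    have "r powr (d - 1) * (LINT t:{0<..}|lborel. Pk d r t * u0 \<delta> lam t)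
        = r powr (d - 1) * r powr (2 - d) * (LINT v:{0<..}|lborel. Pk d 1 v * u0 \<delta> lam (r\<^sup>2 * v))"
      using H_scaled[OF elim] by simp
    also have "r powr (d - 1) * r powr (2 - d) = r"
      using elim by (simp add: powr_add[symmetric])
    also have "r * (LINT v:{0<..}|lborel. Pk d 1 v * u0 \<delta> lam (r\<^sup>2 * v)) = F r"
      unfolding F_def by (simp add: mult.left_commute)
    finally show ?case by simp
  qed
  ultimately show ?thesis by (rule Lim_transform_eventually)
qed

lemma H_lim_inf:
  fixes d lam \<delta> :: real assumes d: "d > 2" and lam: "lam > 0" and dl: "\<delta> > 0"
  shows "((\<lambda>r. r powr (d - 2) * (LINT t:{0<..}|lborel. Pk d r t * u0 \<delta> lam t))
     \<longlongrightarrow> lam / \<delta> * (LINT v:{0<..}|lborel. Pk d 1 v)) at_top"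
proof -
  have "\<forall>\<^sub>F r in at_top. (LINT v:{0<..}|lborel. Pk d 1 v * u0 \<delta> lam (r\<^sup>2 * v)) = r powr (d - 2) * (LINT t:{0<..}|lborel. Pk d r t * u0 \<delta> lam t)"
    using eventually_gt_at_top[of "0::real"]
  proof eventually_elim
    case (elim r)
    have "r powr (d - 2) * (LINT t:{0<..}|lborel. Pk d r t * u0 \<delta> lam t)
        = r powr (d - 2) * r powr (2 - d) * (LINT v:{0<..}|lborel. Pk d 1 v * u0 \<delta> lam (r\<^sup>2 * v))"
      using H_scaled[OF elim] by simp
    also have "r powr (d - 2) * r powr (2 - d) = 1"
      using elim by (simp add: powr_add[symmetric])
    finally show ?case by simp
  qed
  with lim_inf[OF d lam dl] show ?thesis by (rule Lim_transform_eventually)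
qed

lemma four_powr_combine: "(4::real) powr (- d / 2) * (1 / 4) powr a = 4 powr (- d / 2 - a)"
  by (simp add: powr_divide powr_diff)

lemma const1:
  fixes d \<delta> :: real assumes dl: "\<delta> > 0"
  shows "1 / (\<delta> * sqrt (2 * pi)) * ((4 * pi) powr (- d / 2) * ((1 / 4) powr (1 - (d + 1) / 2) * Gamma ((d + 1) / 2 - 1)))
    = 1 / (2 powr (3/2) * pi powr (d / 2) * \<delta>) * (Gamma ((d - 1) / 2) / Gamma (1/2))"
proof -
  have g: "(d + 1) / 2 - 1 = (d - 1) / 2" by (simp add: field_simps)
  have p1: "(4 * pi) powr (- d / 2) = 4 powr (- d / 2) * pi powr (- d / 2)" by (simp add: powr_mult)
  have p2: "(4::real) powr (- d / 2) * (1 / 4) powr (1 - (d + 1) / 2) = 1 / 2"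
  proof -
    have "(4::real) powr (- d / 2) * (1 / 4) powr (1 - (d + 1) / 2) = 4 powr (- d / 2 - (1 - (d + 1) / 2))"
      by (rule four_powr_combine)
    also have "- d / 2 - (1 - (d + 1) / 2) = - (1 / 2)" by (simp add: field_simps)
    also have "(4::real) powr (- (1 / 2)) = 1 / 2"
      by (simp add: powr_minus powr_half_sqrt)
    finally show ?thesis .
  qed
  have p3: "pi powr (- d / 2) = 1 / pi powr (d / 2)"
  proof -
    have "- d / 2 = - (d / 2)" by simp
    then show ?thesis by (simp only: powr_minus_divide)
  qed
  have p4: "(2::real) powr (3 / 2) = 2 * sqrt 2"
  proof -
    have e: "(3/2::real) = 1 + 1/2" by simp
    have "(2::real) powr (3 / 2) = 2 powr (1 + 1 / 2)" by (simp only: e)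
    also have "\<dots> = 2 * sqrt 2" by (subst powr_add) (simp add: powr_half_sqrt)
    finally show ?thesis .
  qed
  have p5: "sqrt (2 * pi) = sqrt 2 * sqrt pi" by (simp add: real_sqrt_mult)
  have "1 / (\<delta> * sqrt (2 * pi)) * ((4 * pi) powr (- d / 2) * ((1 / 4) powr (1 - (d + 1) / 2) * Gamma ((d + 1) / 2 - 1)))
      = 1 / (\<delta> * sqrt (2 * pi)) * ((4 powr (- d / 2) * (1 / 4) powr (1 - (d + 1) / 2)) * pi powr (- d / 2) * Gamma ((d - 1) / 2))"
    unfolding g p1 by (simp add: mult_ac)
  also have "\<dots> = 1 / (\<delta> * (sqrt 2 * sqrt pi)) * (1 / 2 * (1 / pi powr (d / 2)) * Gamma ((d - 1) / 2))"
    unfolding p2 p3 p5 ..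
  also have "\<dots> = 1 / (2 powr (3/2) * pi powr (d / 2) * \<delta>) * (Gamma ((d - 1) / 2) / Gamma (1/2))"
    unfolding p4 Gamma_one_half_real using dl by (simp add: field_simps)
  finally show ?thesis .
qed

lemma const2:
  fixes d \<delta> lam :: real assumes dl: "\<delta> > 0"
  shows "lam / \<delta> * ((4 * pi) powr (- d / 2) * ((1 / 4) powr (1 - d / 2) * Gamma (d / 2 - 1)))
    = lam / (4 * pi powr (d / 2) * \<delta>) * Gamma ((d - 2) / 2)"
proof -
  have g: "d / 2 - 1 = (d - 2) / 2" by (simp add: field_simps)
  have p1: "(4 * pi) powr (- d / 2) = 4 powr (- d / 2) * pi powr (- d / 2)" by (simp add: powr_mult)
  have p2: "(4::real) powr (- d / 2) * (1 / 4) powr (1 - d / 2) = 1 / 4"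
  proof -
    have "(4::real) powr (- d / 2) * (1 / 4) powr (1 - d / 2) = 4 powr (- d / 2 - (1 - d / 2))"
      by (rule four_powr_combine)
    also have "- d / 2 - (1 - d / 2) = - 1" by (simp add: field_simps)
    also have "(4::real) powr (- 1) = 1 / 4" by (simp add: powr_minus)
    finally show ?thesis .
  qed
  have p3: "pi powr (- d / 2) = 1 / pi powr (d / 2)"
  proof -
    have "- d / 2 = - (d / 2)" by simp
    then show ?thesis by (simp only: powr_minus_divide)
  qed
  have "lam / \<delta> * ((4 * pi) powr (- d / 2) * ((1 / 4) powr (1 - d / 2) * Gamma (d / 2 - 1)))
      = lam / \<delta> * ((4 powr (- d / 2) * (1 / 4) powr (1 - d / 2)) * pi powr (- d / 2) * Gamma ((d - 2) / 2))"
    unfolding g p1 by (simp add: mult_ac)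
  also have "\<dots> = lam / \<delta> * (1 / 4 * (1 / pi powr (d / 2)) * Gamma ((d - 2) / 2))"
    unfolding p2 p3 ..
  also have "\<dots> = lam / (4 * pi powr (d / 2) * \<delta>) * Gamma ((d - 2) / 2)"
    using dl by (simp add: field_simps)
  finally show ?thesis .
qed

lemma powr_one_minus: "(r::real) > 0 \<Longrightarrow> r powr (1 - d) = 1 / r powr (d - 1)"
proof -
  assume "r > 0"
  have "1 - d = - (d - 1)" by simp
  then show ?thesis by (simp only: powr_minus_divide)
qed

lemma powr_two_minus: "(r::real) > 0 \<Longrightarrow> r powr (2 - d) = 1 / r powr (d - 2)"
proof -
  assume "r > 0"
  have "2 - d = - (d - 2)" by simp
  then show ?thesis by (simp only: powr_minus_divide)
qed

theorem mainTheorem7: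
  fixes \<delta> lam :: real and u :: "real \<Rightarrow> real"
  assumes "CARD('n) \<ge> 3"
    and "\<delta> > 0" and "lam > 0"
    and "is_potential_density (phi_IG \<delta> lam) u"
  shows "(\<lambda>x::real^'n. green_fun u x) \<sim>[at 0]
           (\<lambda>x. 1 / (2 powr (3/2) * pi powr (real CARD('n) / 2) * \<delta>)
                 * (Gamma ((real CARD('n) - 1) / 2) / Gamma (1/2))
                 * norm x powr (1 - real CARD('n))) \<and>
         (\<lambda>x::real^'n. green_fun u x) \<sim>[at_infinity]
           (\<lambda>x. lam / (4 * pi powr (real CARD('n) / 2) * \<delta>)
                 * Gamma ((real CARD('n) - 2) / 2)
                 * norm x powr (2 - real CARD('n)))"
proof -
  note dl = assms(2) and lam = assms(3) and u = assms(4)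
  define d where "d = real CARD('n)"
  have d: "d > 2" using assms(1) unfolding d_def by simp
  define H where "H r = (LINT t:{0<..}|lborel. Pk d r t * u0 \<delta> lam t)" for r
  have G: "green_fun u x = H (norm x)" for x :: "real ^ 'n"
    unfolding H_def d_def by (rule green_eq_H[OF dl lam u])
  define K1 where "K1 = 1 / (2 powr (3/2) * pi powr (d / 2) * \<delta>) * (Gamma ((d - 1) / 2) / Gamma (1/2))"
  define K2 where "K2 = lam / (4 * pi powr (d / 2) * \<delta>) * Gamma ((d - 2) / 2)"
  have K1pos: "K1 > 0" unfolding K1_def using d dl
    by (intro mult_pos_pos divide_pos_pos Gamma_real_pos) auto
  have K2pos: "K2 > 0" unfolding K2_def using d dl lam
    by (intro mult_pos_pos divide_pos_pos Gamma_real_pos) auto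
  have L1: "((\<lambda>r. r powr (d - 1) * H r) \<longlongrightarrow> K1) (at_right 0)"
    using H_lim_0[OF d lam dl] unfolding H_def K1_def Pk_int2(2)[OF d] const1[OF dl] .
  have L2: "((\<lambda>r. r powr (d - 2) * H r) \<longlongrightarrow> K2) at_top"
    using H_lim_inf[OF d lam dl] unfolding H_def K2_def Pk_int(2)[OF d] const2[OF dl] .
  have N1: "filterlim (\<lambda>x::real^'n. norm x) (at_right 0) (at 0)"
    unfolding filterlim_at
  proof
    show "\<forall>\<^sub>F x in at (0::real^'n). norm x \<in> {0<..} \<and> norm x \<noteq> 0"
      by (auto simp: eventually_at_filter)
    show "((\<lambda>x::real^'n. norm x) \<longlongrightarrow> 0) (at 0)"
      using tendsto_norm_zero[OF tendsto_ident_at[of "0::real^'n" UNIV]] by simp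
  qed
  have part1: "((\<lambda>x::real^'n. green_fun u x / (K1 * norm x powr (1 - d))) \<longlongrightarrow> 1) (at 0)"
  proof -
    have "((\<lambda>x::real^'n. norm x powr (d - 1) * H (norm x) / K1) \<longlongrightarrow> K1 / K1) (at 0)"
      by (intro tendsto_divide tendsto_const filterlim_compose[OF L1 N1]) (use K1pos in auto)
    moreover have "\<forall>\<^sub>F x in at (0::real^'n). norm x powr (d - 1) * H (norm x) / K1 = green_fun u x / (K1 * norm x powr (1 - d))"
      by (auto simp: eventually_at_filter G powr_one_minus)
    ultimately show ?thesis using K1pos by (auto intro: Lim_transform_eventually)
  qed
  have part2: "((\<lambda>x::real^'n. green_fun u x / (K2 * norm x powr (2 - d))) \<longlongrightarrow> 1) at_infinity"
  proof -
    have "((\<lambda>x::real^'n. norm x powr (d - 2) * H (norm x) / K2) \<longlongrightarrow> K2 / K2) at_infinity"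
      by (intro tendsto_divide tendsto_const filterlim_compose[OF L2 filterlim_norm_at_top]) (use K2pos in auto)
    moreover have "\<forall>\<^sub>F x in at_infinity. norm x powr (d - 2) * H (norm x) / K2 = green_fun u (x::real^'n) / (K2 * norm x powr (2 - d))"
    proof -
      have "\<forall>\<^sub>F x in at_infinity. norm (x::real^'n) \<ge> 1"
        unfolding eventually_at_infinity by blast
      then show ?thesis
      proof eventually_elim
        case (elim x)
        then have "norm x > 0" by linarith
        then show ?case by (simp add: G powr_two_minus[of "norm x" d])
      qed
    qed
    ultimately show ?thesis using K2pos by (auto intro: Lim_transform_eventually)
  qed
  show ?thesis
  proof
    show "(\<lambda>x::real^'n. green_fun u x) \<sim>[at 0]
           (\<lambda>x. 1 / (2 powr (3/2) * pi powr (real CARD('n) / 2) * \<delta>)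
                 * (Gamma ((real CARD('n) - 1) / 2) / Gamma (1/2))
                 * norm x powr (1 - real CARD('n)))"
      by (rule asymp_equivI') (use part1 in \<open>simp add: K1_def d_def\<close>)
    show "(\<lambda>x::real^'n. green_fun u x) \<sim>[at_infinity]
           (\<lambda>x. lam / (4 * pi powr (real CARD('n) / 2) * \<delta>)
                 * Gamma ((real CARD('n) - 2) / 2)
                 * norm x powr (2 - real CARD('n)))"
      by (rule asymp_equivI') (use part2 in \<open>simp add: K2_def d_def\<close>)
  qed
qed

end
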